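(* Let $q\ge5$ be a prime power with $q\not\equiv0\pmod3$, and let $\mathfrak{A}$ be the null polarity $P(x_0,x_1,x_2,x_3)\mathfrak{A}=\boldsymbol{\pi}(x_3,-3x_2,3x_1,-x_0)$ of $\mathrm{PG}(3,q)$. Let $\ell$ be a line of $\mathrm{PG}(3,q)$ and $\ell'=\ell\mathfrak{A}$. Then the subgroup of $G_q$ fixing $\ell$ is also the subgroup of $G_q$ fixing $\ell'$.
   Context: $\boldsymbol{\pi}(c_0,c_1,c_2,c_3)$ denotes the plane $c_0x_0+c_1x_1+c_2x_2+c_3x_3=0$. The twisted cubic is $\mathcal{C}=\{P(t^3,t^2,t,1):t\in\mathbb{F}_q\}\cup\{P(1,0,0,0)\}$ and $G_q$ is the group of projectivities of $\mathrm{PG}(3,q)$ mapping $\mathcal{C}$ to itself. For a line $\ell$ through distinct points $P_1,P_2$, $\ell\mathfrak{A}$ is the line $P_1\mathfrak{A}\cap P_2\mathfrak{A}$. A subgroup fixes a line if each of its elements maps the line onto itself. *)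

theory Defs
  imports "HOL-Analysis.Analysis" "HOL-Computational_Algebra.Primes"
begin

text \<open>Coordinate x_0 is component 1, x_1 is component 2, x_2 is component 3, x_3 is component 4.
  A point P(v) is represented by the nonzero vector v (up to nonzero scalars); a set of
  points (line, plane, curve) is represented by the set of all nonzero vectors representing
  its points, which is closed under nonzero scalar multiples.\<close>

definition vec4 :: "'a::zero \<Rightarrow> 'a \<Rightarrow> 'a \<Rightarrow> 'a \<Rightarrow> 'a ^ 4" where
  "vec4 a b c d = (\<chi> i. if i = 1 then a else if i = 2 then b else if i = 3 then c else d)"

definition dotp :: "'a::comm_ring_1 ^ 4 \<Rightarrow> 'a ^ 4 \<Rightarrow> 'a" where
  "dotp c x = (\<Sum>i\<in>UNIV. c $ i * x $ i)"

definition plane :: "'a::field ^ 4 \<Rightarrow> ('a ^ 4) set" where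
  "plane c = {x. x \<noteq> 0 \<and> dotp c x = 0}"

text \<open>Two vectors represent distinct points (i.e. are linearly independent).\<close>
definition indep2 :: "'a::field ^ 4 \<Rightarrow> 'a ^ 4 \<Rightarrow> bool" where
  "indep2 u w \<longleftrightarrow> (\<forall>a b. a *s u + b *s w = 0 \<longrightarrow> a = 0 \<and> b = 0)"

definition line_through :: "'a::field ^ 4 \<Rightarrow> 'a ^ 4 \<Rightarrow> ('a ^ 4) set" where
  "line_through u w = {a *s u + b *s w | a b. a \<noteq> 0 \<or> b \<noteq> 0}"

text \<open>The null polarity: P(x_0,x_1,x_2,x_3) is mapped to pi(x_3,-3x_2,3x_1,-x_0);
  we record the coefficient vector of the image plane.\<close>
definition nullpol :: "'a::field ^ 4 \<Rightarrow> 'a ^ 4" where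
  "nullpol x = vec4 (x $ 4) (- 3 * x $ 3) (3 * x $ 2) (- (x $ 1))"

text \<open>Image of the line P(u)P(w) under the polarity: intersection of the two image planes.\<close>
definition polar_line :: "'a::field ^ 4 \<Rightarrow> 'a ^ 4 \<Rightarrow> ('a ^ 4) set" where
  "polar_line u w = plane (nullpol u) \<inter> plane (nullpol w)"

definition twisted_cubic :: "('a::field ^ 4) set" where
  "twisted_cubic = {c *s vec4 (t ^ 3) (t ^ 2) t 1 | c t. c \<noteq> 0}
                   \<union> {c *s vec4 1 0 0 0 | c. c \<noteq> 0}"

definition proj_fixes :: "'a::field ^ 4 ^ 4 \<Rightarrow> ('a ^ 4) set \<Rightarrow> bool" where
  "proj_fixes M S \<longleftrightarrow> (\<lambda>x. M *v x) ` S = S"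

text \<open>G_q, as the set of nonsingular matrices inducing projectivities that preserve the
  twisted cubic (each projectivity corresponds to the class of its nonzero scalar multiples).\<close>
definition Gq :: "('a::field ^ 4 ^ 4) set" where
  "Gq = {M. invertible M \<and> proj_fixes M twisted_cubic}"

end

theory Submission
  imports Defs "HOL-Computational_Algebra.Polynomial"
begin

lemma vec4_nth [simp]: "vec4 a b c d $ 1 = a" "vec4 a b c d $ 2 = b" "vec4 a b c d $ 3 = c" "vec4 a b c d $ 4 = d"
  by (simp_all add: vec4_def)
lemma vec4_eta: "v = vec4 (v$1) (v$2) (v$3) (v$4)"
  by (simp add: vec_eq_iff forall_4)
lemma vec4_eq_iff: "(v = w) \<longleftrightarrow> v$1 = w$1 \<and> v$2 = w$2 \<and> v$3 = w$3 \<and> v$4 = w$4" for v w :: "'a^4"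
  by (simp add: vec_eq_iff forall_4)
lemma mv4: "(M *v x) $ i = M$i$1 * x$1 + M$i$2 * x$2 + M$i$3 * x$3 + M$i$4 * x$4" for M :: "'a::comm_ring_1^4^4"
  by (simp add: matrix_vector_mult_def sum_4)
lemma mm4: "(M ** N) $ i $ j = M$i$1 * N$1$j + M$i$2 * N$2$j + M$i$3 * N$3$j + M$i$4 * N$4$j" for M :: "'a::comm_ring_1^4^4"
  by (simp add: matrix_matrix_mult_def sum_4)
lemma dotp4: "dotp c x = c$1*x$1 + c$2*x$2 + c$3*x$3 + c$4*x$4"
  by (simp add: dotp_def sum_4)

definition w3 :: "'a::field \<Rightarrow> 'a \<Rightarrow> 'a^4" where
  "w3 x y = vec4 (x^3) (x^2*y) (x*y^2) (y^3)"
definition Bf :: "'a::field^4 \<Rightarrow> 'a^4 \<Rightarrow> 'a" where "Bf x y = dotp (nullpol x) y"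
lemma Bf_expand: "Bf x y = x$4*y$1 - 3*x$3*y$2 + 3*x$2*y$3 - x$1*y$4"
  by (simp add: Bf_def dotp4 nullpol_def algebra_simps)
definition Mob :: "'a::field \<Rightarrow> 'a \<Rightarrow> 'a \<Rightarrow> 'a \<Rightarrow> 'a^4^4" where
 "Mob a b c d = vec4 (vec4 (a^3) (3*a^2*b) (3*a*b^2) (b^3))
    (vec4 (a^2*c) (a^2*d+2*a*b*c) (2*a*b*d+b^2*c) (b^2*d))
    (vec4 (a*c^2) (2*a*c*d+b*c^2) (a*d^2+2*b*c*d) (b*d^2))
    (vec4 (c^3) (3*c^2*d) (3*c*d^2) (d^3))"
lemma Mob_w3: "Mob a b c d *v w3 x y = w3 (a*x+b*y) (c*x+d*y)"
  unfolding vec4_eq_iff apply (simp add: mv4 Mob_def w3_def) apply (intro conjI) apply algebra+ done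
lemma Mob_B: "Bf (Mob a b c d *v x) (Mob a b c d *v y) = (a*d-b*c)^3 * Bf x y"
  by (simp add: Bf_expand mv4 Mob_def) algebra
lemma Mob_mult: "Mob a b c d ** Mob a' b' c' d' = Mob (a*a'+b*c') (a*b'+b*d') (c*a'+d*c') (c*b'+d*d')"
  apply (simp add: vec_eq_iff forall_4 mm4 Mob_def) apply (intro conjI) apply algebra+ done
lemma Mob_id: "Mob 1 0 0 1 = (mat 1 :: 'a::field^4^4)"
  by (simp add: vec4_eq_iff Mob_def mat_def vec4_def)


lemma mv_scale: "M *v (c *s x) = c *s (M *v x)" for M :: "'a::field^4^4"
  by (simp add: vec4_eq_iff mv4 algebra_simps)

lemma C_char: "v \<in> twisted_cubic \<longleftrightarrow> (\<exists>c x y. c \<noteq> 0 \<and> (x \<noteq> 0 \<or> y \<noteq> 0) \<and> v = c *s w3 x y)"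
  (is "?L \<longleftrightarrow> ?R")
proof
  assume ?L
  then show ?R unfolding twisted_cubic_def
  proof (elim UnE CollectE exE conjE)
    fix c t assume "v = c *s vec4 (t ^ 3) (t\<^sup>2) t 1" "c \<noteq> 0"
    then show ?R by (intro exI[of _ c] exI[of _ t] exI[of _ 1]) (simp add: w3_def)
  next
    fix c assume "v = c *s vec4 1 0 0 0" "c \<noteq> 0"
    then show ?R by (intro exI[of _ c] exI[of _ 1] exI[of _ 0]) (simp add: w3_def)
  qed
next
  assume ?R
  then obtain c x y where c: "c \<noteq> 0" "x \<noteq> 0 \<or> y \<noteq> 0" "v = c *s w3 x y" by blast
  show ?L
  proof (cases "y = 0")
    case True
    with c have "v = (c * x^3) *s vec4 1 0 0 0" "c * x^3 \<noteq> 0"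
      by (auto simp: w3_def vec4_eq_iff)
    then show ?thesis unfolding twisted_cubic_def by blast
  next
    case False
    with c have "v = (c * y^3) *s vec4 ((x/y)^3) ((x/y)^2) (x/y) 1" "c * y^3 \<noteq> 0"
      by (auto simp: w3_def vec4_eq_iff field_simps power2_eq_square power3_eq_cube)
    then show ?thesis unfolding twisted_cubic_def by blast
  qed
qed

lemma Mob_C:
  assumes "a*d - b*c \<noteq> 0" "v \<in> twisted_cubic"
  shows "Mob a b c d *v v \<in> twisted_cubic"
proof -
  obtain k x y where k: "k \<noteq> 0" "x \<noteq> 0 \<or> y \<noteq> 0" "v = k *s w3 x y" using assms(2) C_char by blast
  have "a*x+b*y \<noteq> 0 \<or> c*x+d*y \<noteq> 0"
  proof (rule ccontr)
    assume "\<not> ?thesis"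
    then have h: "a*x+b*y = 0" "c*x+d*y = 0" by auto
    have "(a*d-b*c)*x = d*(a*x+b*y) - b*(c*x+d*y)" "(a*d-b*c)*y = a*(c*x+d*y) - c*(a*x+b*y)"
      by (simp_all add: algebra_simps)
    with h assms(1) k(2) show False by simp
  qed
  moreover have "Mob a b c d *v v = k *s w3 (a*x+b*y) (c*x+d*y)"
    using k(3) by (simp add: mv_scale Mob_w3)
  ultimately show ?thesis using k(1) unfolding C_char by blast
qed


lemma cubic_zero:
  fixes k0 k1 k2 k3 :: "'a::{field,finite}"
  assumes card: "CARD('a) \<ge> 5" and h: "\<And>t. t \<noteq> 0 \<Longrightarrow> k0 + k1*t + k2*t^2 + k3*t^3 = 0"
  shows "k0 = 0 \<and> k1 = 0 \<and> k2 = 0 \<and> k3 = 0"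
proof -
  define p where "p = [:k0,k1,k2,k3:]"
  have pe: "poly p t = k0 + k1*t + k2*t^2 + k3*t^3" for t
    unfolding p_def by (simp add: algebra_simps power2_eq_square power3_eq_cube)
  have "p = 0"
  proof (rule ccontr)
    assume "p \<noteq> 0"
    then have "card {x. poly p x = 0} \<le> degree p" by (rule card_poly_roots_bound)
    also have "degree p \<le> 3" unfolding p_def
      using degree_pCons_le[of k0 "[:k1,k2,k3:]"] degree_pCons_le[of k1 "[:k2,k3:]"] degree_pCons_le[of k2 "[:k3:]"]
      by simp
    finally have a: "card {x. poly p x = 0} \<le> 3" .
    have "UNIV - {0} \<subseteq> {x. poly p x = 0}" using h pe by auto
    then have "card (UNIV - {0::'a}) \<le> card {x. poly p x = 0}" by (intro card_mono) auto
    moreover have "card (UNIV - {0::'a}) = CARD('a) - 1" by (simp add: card_Diff_subset)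
    ultimately show False using a card by linarith
  qed
  then show ?thesis by (simp add: p_def)
qed


lemma w3_in_C: "x \<noteq> 0 \<or> y \<noteq> 0 \<Longrightarrow> w3 x y \<in> twisted_cubic"
  unfolding C_char by (rule exI[of _ 1]) auto

lemma C_rel: assumes "v \<in> twisted_cubic"
  shows "v$2^2 = v$1 * v$3" "v$3^2 = v$2 * v$4"
proof -
  obtain c x y where "v = c *s w3 x y" using assms C_char by blast
  then show "v$2^2 = v$1 * v$3" "v$3^2 = v$2 * v$4"
    by (simp_all add: w3_def power2_eq_square power3_eq_cube algebra_simps)
qed

lemma diag_lemma:
  fixes M :: "'a::{field,finite}^4^4"
  assumes card: "CARD('a) \<ge> 5"
    and MC: "\<And>v. v \<in> twisted_cubic \<Longrightarrow> M *v v \<in> twisted_cubic"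
    and e1: "M *v vec4 1 0 0 0 = vec4 \<alpha> 0 0 0" and e4: "M *v vec4 0 0 0 1 = vec4 0 0 0 \<delta>"
    and a0: "\<alpha> \<noteq> 0" and d0: "\<delta> \<noteq> 0"
    and surj: "M *v z = vec4 0 1 0 0"
  shows "\<exists>\<kappa>. \<forall>x y. Bf (M *v x) (M *v y) = \<kappa> * Bf x y"
proof -
  from e1 have c1: "M$1$1 = \<alpha>" "M$2$1 = 0" "M$3$1 = 0" "M$4$1 = 0"
    by (simp_all add: vec4_eq_iff mv4)
  from e4 have c4: "M$1$4 = 0" "M$2$4 = 0" "M$3$4 = 0" "M$4$4 = \<delta>"
    by (simp_all add: vec4_eq_iff mv4)
  define m12 where "m12 = M$1$2"
  define m13 where "m13 = M$1$3"
  define m22 where "m22 = M$2$2"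
  define m23 where "m23 = M$2$3"
  define m32 where "m32 = M$3$2"
  define m33 where "m33 = M$3$3"
  define m42 where "m42 = M$4$2"
  define m43 where "m43 = M$4$3"
  have P2: "(m23^2 - m13*m33) + (2*m22*m23 - m12*m33 - m13*m32)*t + (m22^2 - \<alpha>*m33 - m12*m32)*t^2 + (-\<alpha>*m32)*t^3 = 0"
   and P3: "(-m23*\<delta>) + (m33^2 - m22*\<delta> - m23*m43)*t + (2*m32*m33 - m22*m43 - m23*m42)*t^2 + (m32^2 - m22*m42)*t^3 = 0"
    if t0: "t \<noteq> 0" for t
  proof -
    have "M *v w3 t 1 \<in> twisted_cubic" using MC[OF w3_in_C] by simp
    note r = C_rel[OF this]
    have z: "(M *v w3 t 1)$1 = \<alpha>*t^3 + m12*t^2 + m13*t"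
      "(M *v w3 t 1)$2 = m22*t^2 + m23*t"
      "(M *v w3 t 1)$3 = m32*t^2 + m33*t"
      "(M *v w3 t 1)$4 = m42*t^2 + m43*t + \<delta>"
      by (simp_all add: mv4 w3_def c1 c4 m12_def m13_def m22_def m23_def m32_def m33_def m42_def m43_def)
    have "t^2 * ((m23^2 - m13*m33) + (2*m22*m23 - m12*m33 - m13*m32)*t + (m22^2 - \<alpha>*m33 - m12*m32)*t^2 + (-\<alpha>*m32)*t^3) = 0"
      using r(1) unfolding z by algebra
    then show "(m23^2 - m13*m33) + (2*m22*m23 - m12*m33 - m13*m32)*t + (m22^2 - \<alpha>*m33 - m12*m32)*t^2 + (-\<alpha>*m32)*t^3 = 0"
      using t0 by simp
    have "t * ((-m23*\<delta>) + (m33^2 - m22*\<delta> - m23*m43)*t + (2*m32*m33 - m22*m43 - m23*m42)*t^2 + (m32^2 - m22*m42)*t^3) = 0"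
      using r(2) unfolding z by algebra
    then show "(-m23*\<delta>) + (m33^2 - m22*\<delta> - m23*m43)*t + (2*m32*m33 - m22*m43 - m23*m42)*t^2 + (m32^2 - m22*m42)*t^3 = 0"
      using t0 by simp
  qed
  note K2 = cubic_zero[OF card P2] and K3 = cubic_zero[OF card P3]
  have z32: "m32 = 0" using K2 a0 by simp
  have z23: "m23 = 0" using K3 d0 by simp
  have e22: "m22^2 = \<alpha>*m33" using K2 z32 by simp
  have e33: "m33^2 = m22*\<delta>" using K3 z23 by simp
  have n33: "m33 \<noteq> 0"
  proof
    assume "m33 = 0"
    then have "m22 = 0" using e22 by simp
    then have "(M *v z)$2 = 0" by (simp add: mv4 c1 c4 m22_def[symmetric] m23_def[symmetric] z23)
    then show False using surj by simp
  qed
  have n22: "m22 \<noteq> 0" using e22 n33 a0 by auto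
  have z12: "m12 = 0" and z13: "m13 = 0" using K2 z32 z23 n33 by auto
  have z42: "m42 = 0" and z43: "m43 = 0" using K3 z32 z23 n22 by auto
  have "(m22*m33)*(m22*m33) = (\<alpha>*\<delta>)*(m22*m33)"
    using e22 e33 by (simp add: power2_eq_square algebra_simps)
  then have k: "m22*m33 = \<alpha>*\<delta>" using n22 n33 by simp
  have Mx: "M *v x = vec4 (\<alpha>*x$1) (m22*x$2) (m33*x$3) (\<delta>*x$4)" for x
    by (simp add: vec4_eq_iff mv4 c1 c4 m12_def[symmetric] m13_def[symmetric] m22_def[symmetric]
      m23_def[symmetric] m32_def[symmetric] m33_def[symmetric] m42_def[symmetric] m43_def[symmetric]
      z12 z13 z23 z32 z42 z43)
  show ?thesis
  proof (intro exI allI)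
    fix x y
    show "Bf (M *v x) (M *v y) = (\<alpha>*\<delta>) * Bf x y"
      unfolding Mx Bf_expand using k by simp algebra
  qed
qed


lemma key_lemma:
  fixes M :: "'a::{field,finite}^4^4"
  assumes card: "CARD('a) \<ge> 5" and G: "M \<in> Gq"
  shows "\<exists>\<mu>. \<forall>x y. Bf (M *v x) (M *v y) = \<mu> * Bf x y"
proof -
  from G obtain Mi where Mi: "M ** Mi = mat 1" "Mi ** M = mat 1" and MC0: "(\<lambda>x. M *v x) ` twisted_cubic = twisted_cubic"
    unfolding Gq_def proj_fixes_def invertible_def by blast
  have MC: "M *v v \<in> twisted_cubic" if "v \<in> twisted_cubic" for v using MC0 that by blast
  have inj: "x = y" if "M *v x = M *v y" for x y
  proof -
    have "Mi *v (M *v x) = Mi *v (M *v y)" using that by simp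
    then show ?thesis by (simp add: matrix_vector_mul_assoc Mi)
  qed
  have E1: "vec4 1 0 0 0 = w3 (1::'a) 0" and E4: "vec4 0 0 0 1 = w3 (0::'a) 1" by (simp_all add: w3_def)
  have "M *v w3 1 0 \<in> twisted_cubic" by (rule MC[OF w3_in_C]) simp
  then obtain c1 p1 p2 where P: "c1 \<noteq> 0" "p1 \<noteq> 0 \<or> p2 \<noteq> 0" "M *v w3 1 0 = c1 *s w3 p1 p2"
    unfolding C_char by blast
  have "M *v w3 0 1 \<in> twisted_cubic" by (rule MC[OF w3_in_C]) simp
  then obtain c2 q1 q2 where Q: "c2 \<noteq> 0" "q1 \<noteq> 0 \<or> q2 \<noteq> 0" "M *v w3 0 1 = c2 *s w3 q1 q2"
    unfolding C_char by blast
  define D where "D = p1*q2 - p2*q1"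
  have D0: "D \<noteq> 0"
  proof
    assume D: "D = 0"
    obtain l where l: "q1 = l*p1" "q2 = l*p2"
    proof (cases "p1 = 0")
      case True
      then have "p2 \<noteq> 0" using P by simp
      moreover have "q1 = 0" using D True \<open>p2 \<noteq> 0\<close> by (simp add: D_def)
      ultimately show ?thesis using True that[of "q2/p2"] by simp
    next
      case False
      have "q2 = q1/p1 * p2" using D False by (simp add: D_def field_simps)
      then show ?thesis using False that[of "q1/p1"] by simp
    qed
    have "w3 q1 q2 = l^3 *s w3 p1 p2" by (simp add: l w3_def vec4_eq_iff algebra_simps power2_eq_square power3_eq_cube)
    then have "M *v w3 0 1 = M *v ((c2*l^3/c1) *s w3 1 0)"
      using P Q by (simp add: mv_scale)
    then have "w3 (0::'a) 1 = (c2*l^3/c1) *s w3 1 0" by (rule inj)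
    then show False by (simp add: w3_def vec4_eq_iff)
  qed
  define N where "N = Mob q2 (-q1) (-p2) p1"
  define i where "i = inverse D"
  define Ni where "Ni = Mob (i*p1) (i*q1) (i*p2) (i*q2)"
  have detN: "q2*p1 - (-q1)*(-p2) = D" by (simp add: D_def algebra_simps)
  have iD: "i * D = 1" using D0 by (simp add: i_def)
  have a1: "q2 * (i*p1) + - q1 * (i*p2) = 1" "q2 * (i*q1) + - q1 * (i*q2) = 0"
    "- p2 * (i*p1) + p1 * (i*p2) = 0" "- p2 * (i*q1) + p1 * (i*q2) = 1"
    using iD by (simp_all add: D_def algebra_simps)
  have NNi: "N ** Ni = mat 1" unfolding N_def Ni_def Mob_mult a1 Mob_id ..
  have MMi: "M *v (Mi *v y) = y" for y by (simp add: matrix_vector_mul_assoc Mi)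
  have NNi': "N *v (Ni *v y) = y" for y by (simp add: matrix_vector_mul_assoc NNi)
  have a2: "q2*1 + -q1*0 = q2" "-p2*1 + p1*0 = -p2" "q2*0 + -q1*1 = -q1" "-p2*0+p1*1 = p1"
    "q2*p1 + -q1*p2 = D" "-p2*p1+p1*p2 = 0" "q2*q1 + -q1*q2 = 0" "-p2*q1 + p1*q2 = D"
    by (simp_all add: D_def algebra_simps)
  define M' where "M' = N ** M"
  have M'v: "M' *v x = N *v (M *v x)" for x by (simp add: M'_def matrix_vector_mul_assoc)
  have "\<exists>\<kappa>. \<forall>x y. Bf (M' *v x) (M' *v y) = \<kappa> * Bf x y"
  proof (rule diag_lemma[OF card])
    show "M' *v v \<in> twisted_cubic" if "v \<in> twisted_cubic" for v
      unfolding M'v N_def using detN D0 MC[OF that] by (intro Mob_C) auto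
    show "M' *v vec4 1 0 0 0 = vec4 (c1*D^3) 0 0 0"
      unfolding M'v E1 P(3) N_def mv_scale Mob_w3 a2 by (simp add: w3_def vec4_eq_iff)
    show "M' *v vec4 0 0 0 1 = vec4 0 0 0 (c2*D^3)"
      unfolding M'v E4 Q(3) N_def mv_scale Mob_w3 a2 by (simp add: w3_def vec4_eq_iff)
    show "c1*D^3 \<noteq> 0" "c2*D^3 \<noteq> 0" using P Q D0 by auto
    show "M' *v (Mi *v (Ni *v vec4 0 1 0 0)) = vec4 0 1 0 0"
      unfolding M'v MMi NNi' ..
  qed
  then obtain \<kappa> where k: "\<And>x y. Bf (M' *v x) (M' *v y) = \<kappa> * Bf x y" by blast
  show ?thesis
  proof (intro exI allI)
    fix x y
    have "D^3 * Bf (M *v x) (M *v y) = \<kappa> * Bf x y"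
      using k[of x y] unfolding M'v N_def Mob_B detN .
    then show "Bf (M *v x) (M *v y) = (\<kappa> / D^3) * Bf x y" using D0 by (simp add: field_simps)
  qed
qed

lemma LA_pair:
  fixes P ai aj bi bj ci cj ak bk ck :: "'a::field"
  assumes "P \<noteq> 0" "ck*P = (ci*bj - cj*bi)*ak + (ai*cj - aj*ci)*bk"
  shows "ck = ((ci*bj - cj*bi)/P)*ak + ((ai*cj-aj*ci)/P)*bk"
  using assms by (simp add: field_simps, algebra)
lemma LA_scalar:
  fixes a1 a2 a3 a4 b1 b2 b3 b4 c1 c2 c3 c4 :: "'a::field"
  assumes nz: "(a1*b2 - a2*b1) \<noteq> 0 \<or> (a1*b3 - a3*b1) \<noteq> 0 \<or> (a1*b4 - a4*b1) \<noteq> 0 \<or> (a2*b3 - a3*b2) \<noteq> 0 \<or> (a2*b4 - a4*b2) \<noteq> 0 \<or> (a3*b4 - a4*b3) \<noteq> 0"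
  and m123: "c1*(a2*b3-a3*b2) + c2*(a3*b1-a1*b3) + c3*(a1*b2-a2*b1) = 0"
  and m124: "c1*(a2*b4-a4*b2) + c2*(a4*b1-a1*b4) + c4*(a1*b2-a2*b1) = 0"
  and m134: "c1*(a3*b4-a4*b3) + c3*(a4*b1-a1*b4) + c4*(a1*b3-a3*b1) = 0"
  and m234: "c2*(a3*b4-a4*b3) + c3*(a4*b2-a2*b4) + c4*(a2*b3-a3*b2) = 0"
  shows "\<exists>\<alpha> \<beta>. c1 = \<alpha>*a1+\<beta>*b1 \<and> c2 = \<alpha>*a2+\<beta>*b2 \<and> c3 = \<alpha>*a3+\<beta>*b3 \<and> c4 = \<alpha>*a4+\<beta>*b4"
proof -
  have "\<exists>\<alpha> \<beta>. c1 = \<alpha>*a1+\<beta>*b1 \<and> c2 = \<alpha>*a2+\<beta>*b2 \<and> c3 = \<alpha>*a3+\<beta>*b3 \<and> c4 = \<alpha>*a4+\<beta>*b4" if h: "(a1*b2 - a2*b1) \<noteq> 0"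
  proof (intro exI conjI)
    have "c1*(a1*b2 - a2*b1) = (c1*b2 - c2*b1)*a1 + (a1*c2 - a2*c1)*b1"
       by algebra
    from LA_pair[OF h this] show "c1 = ((c1*b2 - c2*b1)/(a1*b2 - a2*b1))*a1 + ((a1*c2-a2*c1)/(a1*b2 - a2*b1))*b1" .
    have "c2*(a1*b2 - a2*b1) = (c1*b2 - c2*b1)*a2 + (a1*c2 - a2*c1)*b2"
       by algebra
    from LA_pair[OF h this] show "c2 = ((c1*b2 - c2*b1)/(a1*b2 - a2*b1))*a2 + ((a1*c2-a2*c1)/(a1*b2 - a2*b1))*b2" .
    have "c3*(a1*b2 - a2*b1) = (c1*b2 - c2*b1)*a3 + (a1*c2 - a2*c1)*b3"
      using m123 by algebra
    from LA_pair[OF h this] show "c3 = ((c1*b2 - c2*b1)/(a1*b2 - a2*b1))*a3 + ((a1*c2-a2*c1)/(a1*b2 - a2*b1))*b3" .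
    have "c4*(a1*b2 - a2*b1) = (c1*b2 - c2*b1)*a4 + (a1*c2 - a2*c1)*b4"
      using m124 by algebra
    from LA_pair[OF h this] show "c4 = ((c1*b2 - c2*b1)/(a1*b2 - a2*b1))*a4 + ((a1*c2-a2*c1)/(a1*b2 - a2*b1))*b4" .
  qed
  note c0 = this
  have "\<exists>\<alpha> \<beta>. c1 = \<alpha>*a1+\<beta>*b1 \<and> c2 = \<alpha>*a2+\<beta>*b2 \<and> c3 = \<alpha>*a3+\<beta>*b3 \<and> c4 = \<alpha>*a4+\<beta>*b4" if h: "(a1*b3 - a3*b1) \<noteq> 0"
  proof (intro exI conjI)
    have "c1*(a1*b3 - a3*b1) = (c1*b3 - c3*b1)*a1 + (a1*c3 - a3*c1)*b1"
       by algebra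
    from LA_pair[OF h this] show "c1 = ((c1*b3 - c3*b1)/(a1*b3 - a3*b1))*a1 + ((a1*c3-a3*c1)/(a1*b3 - a3*b1))*b1" .
    have "c2*(a1*b3 - a3*b1) = (c1*b3 - c3*b1)*a2 + (a1*c3 - a3*c1)*b2"
      using m123 by algebra
    from LA_pair[OF h this] show "c2 = ((c1*b3 - c3*b1)/(a1*b3 - a3*b1))*a2 + ((a1*c3-a3*c1)/(a1*b3 - a3*b1))*b2" .
    have "c3*(a1*b3 - a3*b1) = (c1*b3 - c3*b1)*a3 + (a1*c3 - a3*c1)*b3"
       by algebra
    from LA_pair[OF h this] show "c3 = ((c1*b3 - c3*b1)/(a1*b3 - a3*b1))*a3 + ((a1*c3-a3*c1)/(a1*b3 - a3*b1))*b3" .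
    have "c4*(a1*b3 - a3*b1) = (c1*b3 - c3*b1)*a4 + (a1*c3 - a3*c1)*b4"
      using m134 by algebra
    from LA_pair[OF h this] show "c4 = ((c1*b3 - c3*b1)/(a1*b3 - a3*b1))*a4 + ((a1*c3-a3*c1)/(a1*b3 - a3*b1))*b4" .
  qed
  note c1 = this
  have "\<exists>\<alpha> \<beta>. c1 = \<alpha>*a1+\<beta>*b1 \<and> c2 = \<alpha>*a2+\<beta>*b2 \<and> c3 = \<alpha>*a3+\<beta>*b3 \<and> c4 = \<alpha>*a4+\<beta>*b4" if h: "(a1*b4 - a4*b1) \<noteq> 0"
  proof (intro exI conjI)
    have "c1*(a1*b4 - a4*b1) = (c1*b4 - c4*b1)*a1 + (a1*c4 - a4*c1)*b1"
       by algebra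
    from LA_pair[OF h this] show "c1 = ((c1*b4 - c4*b1)/(a1*b4 - a4*b1))*a1 + ((a1*c4-a4*c1)/(a1*b4 - a4*b1))*b1" .
    have "c2*(a1*b4 - a4*b1) = (c1*b4 - c4*b1)*a2 + (a1*c4 - a4*c1)*b2"
      using m124 by algebra
    from LA_pair[OF h this] show "c2 = ((c1*b4 - c4*b1)/(a1*b4 - a4*b1))*a2 + ((a1*c4-a4*c1)/(a1*b4 - a4*b1))*b2" .
    have "c3*(a1*b4 - a4*b1) = (c1*b4 - c4*b1)*a3 + (a1*c4 - a4*c1)*b3"
      using m134 by algebra
    from LA_pair[OF h this] show "c3 = ((c1*b4 - c4*b1)/(a1*b4 - a4*b1))*a3 + ((a1*c4-a4*c1)/(a1*b4 - a4*b1))*b3" .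
    have "c4*(a1*b4 - a4*b1) = (c1*b4 - c4*b1)*a4 + (a1*c4 - a4*c1)*b4"
       by algebra
    from LA_pair[OF h this] show "c4 = ((c1*b4 - c4*b1)/(a1*b4 - a4*b1))*a4 + ((a1*c4-a4*c1)/(a1*b4 - a4*b1))*b4" .
  qed
  note c2 = this
  have "\<exists>\<alpha> \<beta>. c1 = \<alpha>*a1+\<beta>*b1 \<and> c2 = \<alpha>*a2+\<beta>*b2 \<and> c3 = \<alpha>*a3+\<beta>*b3 \<and> c4 = \<alpha>*a4+\<beta>*b4" if h: "(a2*b3 - a3*b2) \<noteq> 0"
  proof (intro exI conjI)
    have "c1*(a2*b3 - a3*b2) = (c2*b3 - c3*b2)*a1 + (a2*c3 - a3*c2)*b1"
      using m123 by algebra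
    from LA_pair[OF h this] show "c1 = ((c2*b3 - c3*b2)/(a2*b3 - a3*b2))*a1 + ((a2*c3-a3*c2)/(a2*b3 - a3*b2))*b1" .
    have "c2*(a2*b3 - a3*b2) = (c2*b3 - c3*b2)*a2 + (a2*c3 - a3*c2)*b2"
       by algebra
    from LA_pair[OF h this] show "c2 = ((c2*b3 - c3*b2)/(a2*b3 - a3*b2))*a2 + ((a2*c3-a3*c2)/(a2*b3 - a3*b2))*b2" .
    have "c3*(a2*b3 - a3*b2) = (c2*b3 - c3*b2)*a3 + (a2*c3 - a3*c2)*b3"
       by algebra
    from LA_pair[OF h this] show "c3 = ((c2*b3 - c3*b2)/(a2*b3 - a3*b2))*a3 + ((a2*c3-a3*c2)/(a2*b3 - a3*b2))*b3" .
    have "c4*(a2*b3 - a3*b2) = (c2*b3 - c3*b2)*a4 + (a2*c3 - a3*c2)*b4"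
      using m234 by algebra
    from LA_pair[OF h this] show "c4 = ((c2*b3 - c3*b2)/(a2*b3 - a3*b2))*a4 + ((a2*c3-a3*c2)/(a2*b3 - a3*b2))*b4" .
  qed
  note c3 = this
  have "\<exists>\<alpha> \<beta>. c1 = \<alpha>*a1+\<beta>*b1 \<and> c2 = \<alpha>*a2+\<beta>*b2 \<and> c3 = \<alpha>*a3+\<beta>*b3 \<and> c4 = \<alpha>*a4+\<beta>*b4" if h: "(a2*b4 - a4*b2) \<noteq> 0"
  proof (intro exI conjI)
    have "c1*(a2*b4 - a4*b2) = (c2*b4 - c4*b2)*a1 + (a2*c4 - a4*c2)*b1"
      using m124 by algebra
    from LA_pair[OF h this] show "c1 = ((c2*b4 - c4*b2)/(a2*b4 - a4*b2))*a1 + ((a2*c4-a4*c2)/(a2*b4 - a4*b2))*b1" .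
    have "c2*(a2*b4 - a4*b2) = (c2*b4 - c4*b2)*a2 + (a2*c4 - a4*c2)*b2"
       by algebra
    from LA_pair[OF h this] show "c2 = ((c2*b4 - c4*b2)/(a2*b4 - a4*b2))*a2 + ((a2*c4-a4*c2)/(a2*b4 - a4*b2))*b2" .
    have "c3*(a2*b4 - a4*b2) = (c2*b4 - c4*b2)*a3 + (a2*c4 - a4*c2)*b3"
      using m234 by algebra
    from LA_pair[OF h this] show "c3 = ((c2*b4 - c4*b2)/(a2*b4 - a4*b2))*a3 + ((a2*c4-a4*c2)/(a2*b4 - a4*b2))*b3" .
    have "c4*(a2*b4 - a4*b2) = (c2*b4 - c4*b2)*a4 + (a2*c4 - a4*c2)*b4"
       by algebra
    from LA_pair[OF h this] show "c4 = ((c2*b4 - c4*b2)/(a2*b4 - a4*b2))*a4 + ((a2*c4-a4*c2)/(a2*b4 - a4*b2))*b4" .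
  qed
  note c4 = this
  have "\<exists>\<alpha> \<beta>. c1 = \<alpha>*a1+\<beta>*b1 \<and> c2 = \<alpha>*a2+\<beta>*b2 \<and> c3 = \<alpha>*a3+\<beta>*b3 \<and> c4 = \<alpha>*a4+\<beta>*b4" if h: "(a3*b4 - a4*b3) \<noteq> 0"
  proof (intro exI conjI)
    have "c1*(a3*b4 - a4*b3) = (c3*b4 - c4*b3)*a1 + (a3*c4 - a4*c3)*b1"
      using m134 by algebra
    from LA_pair[OF h this] show "c1 = ((c3*b4 - c4*b3)/(a3*b4 - a4*b3))*a1 + ((a3*c4-a4*c3)/(a3*b4 - a4*b3))*b1" .
    have "c2*(a3*b4 - a4*b3) = (c3*b4 - c4*b3)*a2 + (a3*c4 - a4*c3)*b2"
      using m234 by algebra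
    from LA_pair[OF h this] show "c2 = ((c3*b4 - c4*b3)/(a3*b4 - a4*b3))*a2 + ((a3*c4-a4*c3)/(a3*b4 - a4*b3))*b2" .
    have "c3*(a3*b4 - a4*b3) = (c3*b4 - c4*b3)*a3 + (a3*c4 - a4*c3)*b3"
       by algebra
    from LA_pair[OF h this] show "c3 = ((c3*b4 - c4*b3)/(a3*b4 - a4*b3))*a3 + ((a3*c4-a4*c3)/(a3*b4 - a4*b3))*b3" .
    have "c4*(a3*b4 - a4*b3) = (c3*b4 - c4*b3)*a4 + (a3*c4 - a4*c3)*b4"
       by algebra
    from LA_pair[OF h this] show "c4 = ((c3*b4 - c4*b3)/(a3*b4 - a4*b3))*a4 + ((a3*c4-a4*c3)/(a3*b4 - a4*b3))*b4" .
  qed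
  note c5 = this
  show ?thesis using nz c0 c1 c2 c3 c4 c5 by blast
qed


lemma LA_vec:
  fixes a b c :: "'a::field^4"
  assumes ind: "indep2 a b" and h: "\<And>y. dotp a y = 0 \<Longrightarrow> dotp b y = 0 \<Longrightarrow> dotp c y = 0"
  shows "\<exists>\<alpha> \<beta>. c = \<alpha> *s a + \<beta> *s b"
proof -
  obtain a1 a2 a3 a4 where a: "a = vec4 a1 a2 a3 a4" by (metis vec4_eta)
  obtain b1 b2 b3 b4 where b: "b = vec4 b1 b2 b3 b4" by (metis vec4_eta)
  obtain c1 c2 c3 c4 where c: "c = vec4 c1 c2 c3 c4" by (metis vec4_eta)
  have ind': "\<And>x y. x *s a + y *s b = 0 \<Longrightarrow> x = 0 \<and> y = 0" using ind unfolding indep2_def by blast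
  have nz: "(a1*b2 - a2*b1) \<noteq> 0 \<or> (a1*b3 - a3*b1) \<noteq> 0 \<or> (a1*b4 - a4*b1) \<noteq> 0 \<or> (a2*b3 - a3*b2) \<noteq> 0 \<or> (a2*b4 - a4*b2) \<noteq> 0 \<or> (a3*b4 - a4*b3) \<noteq> 0"
  proof (rule ccontr)
    assume "\<not> ?thesis"
    then have z: "a1*b2 = a2*b1" "a1*b3 = a3*b1" "a1*b4 = a4*b1" "a2*b3 = a3*b2" "a2*b4 = a4*b2" "a3*b4 = a4*b3"
      by auto
    show False
    proof (cases "a1 = 0 \<and> a2 = 0 \<and> a3 = 0 \<and> a4 = 0")
      case True
      then have "1 *s a + 0 *s b = 0" by (simp add: a vec4_eq_iff)
      from ind'[OF this] show False by simp
    next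
      case False
      then consider "a1 \<noteq> 0" | "a2 \<noteq> 0" | "a3 \<noteq> 0" | "a4 \<noteq> 0" by blast
      then show False
      proof cases
        case 1
        have "b1 *s a + (-a1) *s b = 0" using z by (simp add: a b vec4_eq_iff algebra_simps)
        from ind'[OF this] show False using 1 by simp
      next
        case 2
        have "b2 *s a + (-a2) *s b = 0" using z by (simp add: a b vec4_eq_iff algebra_simps)
        from ind'[OF this] show False using 2 by simp
      next
        case 3
        have "b3 *s a + (-a3) *s b = 0" using z by (simp add: a b vec4_eq_iff algebra_simps)
        from ind'[OF this] show False using 3 by simp
      next
        case 4
        have "b4 *s a + (-a4) *s b = 0" using z by (simp add: a b vec4_eq_iff algebra_simps)
        from ind'[OF this] show False using 4 by simp
      qed
    qed
  qed
  have H: "c1*y1 + c2*y2 + c3*y3 + c4*y4 = 0"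
    if "a1*y1 + a2*y2 + a3*y3 + a4*y4 = 0" "b1*y1 + b2*y2 + b3*y3 + b4*y4 = 0" for y1 y2 y3 y4
    using h[of "vec4 y1 y2 y3 y4"] that by (simp add: a b c dotp4)
  have m123: "c1*(a2*b3-a3*b2) + c2*(a3*b1-a1*b3) + c3*(a1*b2-a2*b1) = 0"
    using H[of "a2*b3-a3*b2" "a3*b1-a1*b3" "a1*b2-a2*b1" 0] by (simp add: algebra_simps)
  have m124: "c1*(a2*b4-a4*b2) + c2*(a4*b1-a1*b4) + c4*(a1*b2-a2*b1) = 0"
    using H[of "a2*b4-a4*b2" "a4*b1-a1*b4" 0 "a1*b2-a2*b1"] by (simp add: algebra_simps)
  have m134: "c1*(a3*b4-a4*b3) + c3*(a4*b1-a1*b4) + c4*(a1*b3-a3*b1) = 0"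
    using H[of "a3*b4-a4*b3" 0 "a4*b1-a1*b4" "a1*b3-a3*b1"] by (simp add: algebra_simps)
  have m234: "c2*(a3*b4-a4*b3) + c3*(a4*b2-a2*b4) + c4*(a2*b3-a3*b2) = 0"
    using H[of 0 "a3*b4-a4*b3" "a4*b2-a2*b4" "a2*b3-a3*b2"] by (simp add: algebra_simps)
  obtain \<alpha> \<beta> where "c1 = \<alpha>*a1+\<beta>*b1 \<and> c2 = \<alpha>*a2+\<beta>*b2 \<and> c3 = \<alpha>*a3+\<beta>*b3 \<and> c4 = \<alpha>*a4+\<beta>*b4"
    using LA_scalar[OF nz m123 m124 m134 m234] by blast
  then have "c = \<alpha> *s a + \<beta> *s b" by (simp add: a b c vec4_eq_iff)
  then show ?thesis by blast
qed



lemma three_nz: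
  assumes "CARD('a::{field,finite}) mod 3 \<noteq> 0"
  shows "(3::'a) \<noteq> 0"
proof
  assume h3: "(3::'a) = 0"
  have "(3::'a) = 2 + 1" by simp
  then have n2: "(2::'a) \<noteq> 0" using h3 by (metis add_0 one_neq_zero)
  have "(2::'a) - 1 = 1" by simp
  then have n12: "(1::'a) \<noteq> 2" by (metis diff_self one_neq_zero)
  have "(4::'a) = 3 + 1" by simp
  then have f4: "(4::'a) = 1" using h3 by simp
  have A: "x + 1 + 2 = x" "x + 2 + 1 = x" "x + 2 + 2 = x + 1" "x + 1 + 1 = x + 2" for x :: 'a
    using h3 f4 by (simp_all add: add.assoc)
  define r where "r = {(x::'a,y). y = x \<or> y = x + 1 \<or> y = x + 2}"
  have eqv: "equiv UNIV r"
    unfolding equiv_def refl_on_def sym_def trans_def r_def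
  proof (intro conjI allI impI)
    fix x y assume "(x, y) \<in> {(x::'a, y). y = x \<or> y = x + 1 \<or> y = x + 2}"
    then show "(y, x) \<in> {(x::'a, y). y = x \<or> y = x + 1 \<or> y = x + 2}" using A by auto
  next
    fix x y z assume "(x, y) \<in> {(x::'a, y). y = x \<or> y = x + 1 \<or> y = x + 2}"
      "(y, z) \<in> {(x::'a, y). y = x \<or> y = x + 1 \<or> y = x + 2}"
    then show "(x, z) \<in> {(x::'a, y). y = x \<or> y = x + 1 \<or> y = x + 2}" using A by auto
  qed auto
  have "3 dvd CARD('a)"
  proof (rule equiv_imp_dvd_card[OF _ eqv])
    fix X assume "X \<in> UNIV // r"
    then obtain x where X: "X = r `` {x}" by (auto elim: quotientE)
    have "X = {x, x+1, x+2}" unfolding X r_def by auto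
    moreover have "card {x, x+1, x+2} = 3" using n2 n12 by auto
    ultimately show "3 dvd card X" by simp
  qed simp
  with assms show False by simp
qed

lemma nullpol_add: "nullpol (x + y) = nullpol x + nullpol (y::'a::field^4)"
  by (simp add: nullpol_def vec4_eq_iff algebra_simps)
lemma nullpol_scale: "nullpol (c *s x) = c *s nullpol (x::'a::field^4)"
  by (simp add: nullpol_def vec4_eq_iff algebra_simps)
lemma nullpol_diff: "nullpol (x - y) = nullpol x - nullpol (y::'a::field^4)"
  by (simp add: nullpol_def vec4_eq_iff algebra_simps)
lemma nullpol_zero: "(3::'a::field) \<noteq> 0 \<Longrightarrow> nullpol x = 0 \<Longrightarrow> x = (0::'a^4)"
  by (simp add: nullpol_def vec4_eq_iff)

lemma Bf_lin: "Bf (a *s u + b *s w) y = a * Bf u y + b * Bf w y"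
  by (simp add: Bf_expand algebra_simps)
lemma Bf_zero: "Bf x 0 = 0"
  by (simp add: Bf_expand)

lemma dperp:
  fixes u w x :: "'a::field^4"
  assumes three: "(3::'a) \<noteq> 0" and ind: "indep2 u w"
    and h: "\<And>y. Bf u y = 0 \<Longrightarrow> Bf w y = 0 \<Longrightarrow> Bf x y = 0"
  shows "\<exists>\<alpha> \<beta>. x = \<alpha> *s u + \<beta> *s w"
proof -
  have "indep2 (nullpol u) (nullpol w)" unfolding indep2_def
  proof (intro allI impI)
    fix a b assume "a *s nullpol u + b *s nullpol w = 0"
    then have "nullpol (a *s u + b *s w) = 0" by (simp add: nullpol_add nullpol_scale)
    then have "a *s u + b *s w = 0" using nullpol_zero[OF three] by blast
    then show "a = 0 \<and> b = 0" using ind unfolding indep2_def by blast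
  qed
  from LA_vec[OF this, of "nullpol x"] h obtain \<alpha> \<beta> where
    e: "nullpol x = \<alpha> *s nullpol u + \<beta> *s nullpol w" unfolding Bf_def by blast
  have "nullpol (x - (\<alpha> *s u + \<beta> *s w)) = 0"
    by (simp add: nullpol_diff nullpol_add nullpol_scale e)
  then have "x - (\<alpha> *s u + \<beta> *s w) = 0" using nullpol_zero[OF three] by blast
  then show ?thesis by auto
qed



lemma fix_of_subset:
  fixes M :: "'a::{field,finite}^4^4"
  assumes G: "M \<in> Gq" and sub: "(\<lambda>x. M *v x) ` S \<subseteq> S"
  shows "proj_fixes M S"
proof -
  from G obtain Mi where Mi: "Mi ** M = mat 1" unfolding Gq_def invertible_def by blast
  have "inj (\<lambda>x. M *v x)"
  proof (rule injI)
    fix x y assume "M *v x = M *v y"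
    then have "Mi *v (M *v x) = Mi *v (M *v y)" by simp
    then show "x = y" by (simp add: matrix_vector_mul_assoc Mi)
  qed
  then have "card ((\<lambda>x. M *v x) ` S) = card S" by (simp add: card_image inj_on_subset)
  then show ?thesis unfolding proj_fixes_def using sub by (intro card_subset_eq) auto
qed

lemma Gq_nz: "M \<in> Gq \<Longrightarrow> x \<noteq> 0 \<Longrightarrow> M *v x \<noteq> (0::'a::field^4)"
proof -
  assume G: "M \<in> Gq" and x: "x \<noteq> 0"
  from G obtain Mi where Mi: "Mi ** M = mat 1" unfolding Gq_def invertible_def by blast
  show ?thesis
  proof
    assume "M *v x = 0"
    then have "Mi *v (M *v x) = 0" by simp
    then show False using x by (simp add: matrix_vector_mul_assoc Mi)
  qed
qed

theorem lemma4p3: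
  fixes u w :: "'a::{field, finite} ^ 4"
  assumes "\<exists>p k. prime p \<and> k > 0 \<and> CARD('a) = p ^ k"
    and "CARD('a) \<ge> 5"
    and "CARD('a) mod 3 \<noteq> 0"
    and "indep2 u w"
  shows "{M \<in> Gq. proj_fixes M (line_through u w)}
       = {M \<in> Gq. proj_fixes M (polar_line u w)}"
proof -
  note ind = assms(4)
  have three: "(3::'a) \<noteq> 0" using assms(3) by (rule three_nz)
  have memL: "x \<in> line_through u w \<longleftrightarrow> x \<noteq> 0 \<and> (\<exists>a b. x = a *s u + b *s w)" for x
  proof
    assume "x \<in> line_through u w"
    then obtain a b where "x = a *s u + b *s w" "a \<noteq> 0 \<or> b \<noteq> 0" unfolding line_through_def by blast
    then show "x \<noteq> 0 \<and> (\<exists>a b. x = a *s u + b *s w)" using ind unfolding indep2_def by metis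
  next
    assume "x \<noteq> 0 \<and> (\<exists>a b. x = a *s u + b *s w)"
    then obtain a b where "x = a *s u + b *s w" "x \<noteq> 0" by blast
    moreover then have "a \<noteq> 0 \<or> b \<noteq> 0" by auto
    ultimately show "x \<in> line_through u w" unfolding line_through_def by blast
  qed
  have memL': "x \<in> polar_line u w \<longleftrightarrow> x \<noteq> 0 \<and> Bf u x = 0 \<and> Bf w x = 0" for x
    unfolding polar_line_def plane_def Bf_def by blast
  have uL: "u \<in> line_through u w" and wL: "w \<in> line_through u w"
  proof -
    have "u \<noteq> 0"
    proof
      assume "u = 0"
      then have "1 *s u + 0 *s w = 0" by simp
      then have "(1::'a) = 0" using ind unfolding indep2_def by blast
      then show False by simp
    qed
    moreover have "w \<noteq> 0"
    proof
      assume "w = 0"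
      then have "0 *s u + 1 *s w = 0" by simp
      then have "(1::'a) = 0" using ind unfolding indep2_def by blast
      then show False by simp
    qed
    moreover have "u = 1 *s u + 0 *s w" "w = 0 *s u + 1 *s w" by simp_all
    ultimately show "u \<in> line_through u w" "w \<in> line_through u w" unfolding memL by blast+
  qed
  have dir1: "proj_fixes M (polar_line u w)" if G: "M \<in> Gq" and F: "proj_fixes M (line_through u w)" for M
  proof -
    obtain \<mu> where mu: "\<And>x y. Bf (M *v x) (M *v y) = \<mu> * Bf x y" using key_lemma[OF assms(2) G] by blast
    have orth: "Bf z (M *v x) = 0" if z: "z \<in> line_through u w" and x: "x \<in> polar_line u w" for z x
    proof -
      from z F obtain z' where z': "z' \<in> line_through u w" "z = M *v z'" unfolding proj_fixes_def by blast
      then obtain a b where "z' = a *s u + b *s w" unfolding memL by blast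
      then show ?thesis using x unfolding z'(2) mu memL' by (simp add: Bf_lin)
    qed
    show "proj_fixes M (polar_line u w)"
    proof (rule fix_of_subset[OF G], safe)
      fix x assume x: "x \<in> polar_line u w"
      then show "M *v x \<in> polar_line u w"
        unfolding memL' using Gq_nz[OF G] orth[OF uL x] orth[OF wL x] by (simp add: memL')
    qed
  qed
  have dir2: "proj_fixes M (line_through u w)" if G: "M \<in> Gq" and F: "proj_fixes M (polar_line u w)" for M
  proof -
    obtain \<mu> where mu: "\<And>x y. Bf (M *v x) (M *v y) = \<mu> * Bf x y" using key_lemma[OF assms(2) G] by blast
    show "proj_fixes M (line_through u w)"
    proof (rule fix_of_subset[OF G], safe)
      fix x assume x: "x \<in> line_through u w"
      then obtain a b where xab: "x = a *s u + b *s w" and x0: "x \<noteq> 0" unfolding memL by blast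
      have "\<exists>\<alpha> \<beta>. M *v x = \<alpha> *s u + \<beta> *s w"
      proof (rule dperp[OF three ind])
        fix y assume y: "Bf u y = 0" "Bf w y = 0"
        show "Bf (M *v x) y = 0"
        proof (cases "y = 0")
          case True then show ?thesis by (simp add: Bf_zero)
        next
          case False
          then have "y \<in> polar_line u w" using y memL' by blast
          with F obtain y' where y': "y' \<in> polar_line u w" "y = M *v y'" unfolding proj_fixes_def by blast
          then show ?thesis unfolding y'(2) mu xab memL' by (simp add: Bf_lin)
        qed
      qed
      then show "M *v x \<in> line_through u w" unfolding memL using Gq_nz[OF G x0] by blast
    qed
  qed
  show ?thesis using dir1 dir2 by blast
qed
end
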